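(* Let $G$ be a finite nonabelian group and suppose $Z_2=Z(G)$, where $Z_2/Z(G)=Z(G/Z(G))$. Then: (1) $K(G)$ is the intersection of all noncentral normal subgroups of $G$ (i.e. normal subgroups not contained in $Z(G)$); (2) $K(G)\not\le Z(G)$ if and only if $G$ has a unique subgroup $N$ that is minimal among the noncentral normal subgroups of $G$.
   Context: All groups are finite. For $\chi\in\mathrm{Irr}(G)$, the center of $\chi$ is $Z(\chi)=\{g\in G : |\chi(g)|=\chi(1)\}$; equivalently $Z(\chi)/\ker(\chi)=Z(G/\ker(\chi))$. For a nonabelian group $G$, let $\mathcal{X}=\{\chi\in\mathrm{Irr}(G) : Z(\chi)>Z(G)\}$ (strict containment) and define $K(G)=\bigcap_{\chi\in\mathcal{X}}\ker(\chi)$. If $G$ is abelian, set $K(G)=G$. *)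

theory Defs
  imports "HOL-Algebra.Coset" "Jordan_Normal_Form.Matrix"
begin

definition grp_center :: "('a, 'b) monoid_scheme \<Rightarrow> 'a set" where
  "grp_center G = {z \<in> carrier G. \<forall>x \<in> carrier G. x \<otimes>\<^bsub>G\<^esub> z = z \<otimes>\<^bsub>G\<^esub> x}"

definition second_center :: "('a, 'b) monoid_scheme \<Rightarrow> 'a set" where
  "second_center G = {g \<in> carrier G. grp_center G #>\<^bsub>G\<^esub> g \<in> grp_center (G Mod grp_center G)}"

definition mat_trace :: "complex mat \<Rightarrow> complex" where
  "mat_trace A = (\<Sum>i<dim_row A. A $$ (i, i))"

definition is_rep :: "('a, 'b) monoid_scheme \<Rightarrow> nat \<Rightarrow> ('a \<Rightarrow> complex mat) \<Rightarrow> bool" where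
  "is_rep G n \<rho> \<longleftrightarrow>
     (\<forall>g \<in> carrier G. \<rho> g \<in> carrier_mat n n) \<and>
     \<rho> \<one>\<^bsub>G\<^esub> = 1\<^sub>m n \<and>
     (\<forall>g \<in> carrier G. \<forall>h \<in> carrier G. \<rho> (g \<otimes>\<^bsub>G\<^esub> h) = \<rho> g * \<rho> h)"

definition invariant_subspace :: "('a, 'b) monoid_scheme \<Rightarrow> nat \<Rightarrow> ('a \<Rightarrow> complex mat) \<Rightarrow> complex vec set \<Rightarrow> bool" where
  "invariant_subspace G n \<rho> W \<longleftrightarrow>
     W \<subseteq> carrier_vec n \<and> 0\<^sub>v n \<in> W \<and>
     (\<forall>v \<in> W. \<forall>w \<in> W. v + w \<in> W) \<and>
     (\<forall>c. \<forall>v \<in> W. c \<cdot>\<^sub>v v \<in> W) \<and>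
     (\<forall>g \<in> carrier G. \<forall>v \<in> W. \<rho> g *\<^sub>v v \<in> W)"

definition irr_rep :: "('a, 'b) monoid_scheme \<Rightarrow> nat \<Rightarrow> ('a \<Rightarrow> complex mat) \<Rightarrow> bool" where
  "irr_rep G n \<rho> \<longleftrightarrow> is_rep G n \<rho> \<and> n > 0 \<and>
     (\<forall>W. invariant_subspace G n \<rho> W \<longrightarrow> W = {0\<^sub>v n} \<or> W = carrier_vec n)"

definition irr_char :: "('a, 'b) monoid_scheme \<Rightarrow> ('a \<Rightarrow> complex) \<Rightarrow> bool" where
  "irr_char G \<chi> \<longleftrightarrow> (\<exists>n \<rho>. irr_rep G n \<rho> \<and> (\<forall>g \<in> carrier G. \<chi> g = mat_trace (\<rho> g)))"

definition char_ker :: "('a, 'b) monoid_scheme \<Rightarrow> ('a \<Rightarrow> complex) \<Rightarrow> 'a set" where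
  "char_ker G \<chi> = {g \<in> carrier G. \<chi> g = \<chi> \<one>\<^bsub>G\<^esub>}"

definition char_center :: "('a, 'b) monoid_scheme \<Rightarrow> ('a \<Rightarrow> complex) \<Rightarrow> 'a set" where
  "char_center G \<chi> = {g \<in> carrier G. complex_of_real (cmod (\<chi> g)) = \<chi> \<one>\<^bsub>G\<^esub>}"

definition K_grp :: "('a, 'b) monoid_scheme \<Rightarrow> 'a set" where
  "K_grp G = (if grp_center G = carrier G then carrier G
     else carrier G \<inter> \<Inter> {char_ker G \<chi> | \<chi>. irr_char G \<chi> \<and> grp_center G \<subset> char_center G \<chi>})"

end

theory Submission
  imports Defs "Jordan_Normal_Form.Spectral_Radius" "HOL-Algebra.Multiplicative_Group" "HOL-Algebra.Generated_Groups"
begin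

lemma mult_entry:
  assumes "A \<in> carrier_mat n n" "B \<in> carrier_mat n n" "i < n" "j < n"
  shows "(A * B) $$ (i,j) = (\<Sum>l<n. A $$ (i,l) * B $$ (l,j))"
  using assms by (auto simp: scalar_prod_def lessThan_atLeast0 intro!: sum.cong)

definition ulb :: "nat \<Rightarrow> 'a mat \<Rightarrow> 'a mat" where
  "ulb k A = mat k k (\<lambda>(i,j). A $$ (i,j))"
definition lrb :: "nat \<Rightarrow> nat \<Rightarrow> 'a mat \<Rightarrow> 'a mat" where
  "lrb n k A = mat (n-k) (n-k) (\<lambda>(i,j). A $$ (i+k, j+k))"
definition llz :: "nat \<Rightarrow> nat \<Rightarrow> 'a::zero mat \<Rightarrow> bool" where
  "llz n k A \<longleftrightarrow> (\<forall>i j. k \<le> i \<and> i < n \<and> j < k \<longrightarrow> A $$ (i,j) = 0)"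

lemma ulb_carrier[simp]: "ulb k A \<in> carrier_mat k k" unfolding ulb_def by simp
lemma lrb_carrier[simp]: "lrb n k A \<in> carrier_mat (n-k) (n-k)" unfolding lrb_def by simp

lemma shift_img: assumes "(k::nat) \<le> n" shows "{k..<n} = (\<lambda>l. l + k) ` {..<n-k}"
proof (rule equalityI)
  show "{k..<n} \<subseteq> (\<lambda>l. l+k) ` {..<n-k}"
  proof
    fix x assume "x \<in> {k..<n}" thus "x \<in> (\<lambda>l. l+k) ` {..<n-k}" by (intro image_eqI[of _ _ "x - k"]) auto
  qed
qed (use assms in auto)

context fixes A B :: "'a::comm_ring_1 mat" and n k
  assumes A: "A \<in> carrier_mat n n" and B: "B \<in> carrier_mat n n" and kn: "k \<le> n"
    and zA: "llz n k A" and zB: "llz n k B"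
begin

lemma llz_mult: "llz n k (A * B)"
  unfolding llz_def
proof (intro allI impI)
  fix i j assume ij: "k \<le> i \<and> i < n \<and> j < k"
  have "(A * B) $$ (i,j) = (\<Sum>l<n. A $$ (i,l) * B $$ (l,j))" using mult_entry[OF A B] ij kn by simp
  also have "\<dots> = 0"
  proof (rule sum.neutral, intro ballI)
    fix l assume "l \<in> {..<n}"
    thus "A $$ (i,l) * B $$ (l,j) = 0" using zA zB ij unfolding llz_def
      by (cases "l < k") auto
  qed
  finally show "(A * B) $$ (i,j) = 0" .
qed

lemma ulb_mult: "ulb k (A * B) = ulb k A * ulb k B"
proof (rule eq_matI)
  fix i j assume ij: "i < dim_row (ulb k A * ulb k B)" "j < dim_col (ulb k A * ulb k B)"
  hence ij: "i < k" "j < k" by (auto simp: ulb_def)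
  have "ulb k (A * B) $$ (i,j) = (\<Sum>l<n. A $$ (i,l) * B $$ (l,j))"
    using mult_entry[OF A B] ij kn by (simp add: ulb_def)
  also have "\<dots> = (\<Sum>l<k. A $$ (i,l) * B $$ (l,j))"
    by (rule sum.mono_neutral_right, insert kn zB ij, auto simp: llz_def)
  also have "\<dots> = (ulb k A * ulb k B) $$ (i,j)"
    using mult_entry[of "ulb k A" k "ulb k B"] ij by (simp add: ulb_def)
  finally show "ulb k (A * B) $$ (i,j) = (ulb k A * ulb k B) $$ (i,j)" .
qed (auto simp: ulb_def)

lemma lrb_mult: "lrb n k (A * B) = lrb n k A * lrb n k B"
proof (rule eq_matI)
  fix i j assume ij: "i < dim_row (lrb n k A * lrb n k B)" "j < dim_col (lrb n k A * lrb n k B)"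
  hence ij: "i < n - k" "j < n - k" by (auto simp: lrb_def)
  have "lrb n k (A * B) $$ (i,j) = (\<Sum>l<n. A $$ (i+k,l) * B $$ (l,j+k))"
    using mult_entry[OF A B] ij kn by (simp add: lrb_def)
  also have "\<dots> = (\<Sum>l\<in>{k..<n}. A $$ (i+k,l) * B $$ (l,j+k))"
    by (rule sum.mono_neutral_right, insert kn zA ij, auto simp: llz_def)
  also have "\<dots> = (\<Sum>l<n-k. A $$ (i+k,l+k) * B $$ (l+k,j+k))"
  proof -
    have "{k..<n} = (\<lambda>l. l + k) ` {..<n-k}" using kn by (rule shift_img)
    thus ?thesis by (simp add: sum.reindex)
  qed
  also have "\<dots> = (lrb n k A * lrb n k B) $$ (i,j)"
    using mult_entry[of "lrb n k A" "n-k" "lrb n k B"] ij by (simp add: lrb_def)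
  finally show "lrb n k (A * B) $$ (i,j) = (lrb n k A * lrb n k B) $$ (i,j)" .
qed (auto simp: lrb_def)

end

lemma llz_one: "llz n k (1\<^sub>m n)" unfolding llz_def by auto
lemma ulb_one: "k \<le> n \<Longrightarrow> ulb k (1\<^sub>m n) = 1\<^sub>m k" unfolding ulb_def by (rule eq_matI) auto
lemma lrb_one: "lrb n k (1\<^sub>m n) = 1\<^sub>m (n-k)" unfolding lrb_def by (rule eq_matI) auto

lemma block_pow:
  fixes A :: "'a::comm_ring_1 mat"
  assumes A: "A \<in> carrier_mat n n" and kn: "k \<le> n" and zA: "llz n k A"
  shows "llz n k (A ^\<^sub>m r) \<and> ulb k (A ^\<^sub>m r) = ulb k A ^\<^sub>m r \<and> lrb n k (A ^\<^sub>m r) = lrb n k A ^\<^sub>m r"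
proof (induction r)
  case 0
  then show ?case using llz_one[of n k] ulb_one[OF kn] lrb_one[of n k] carrier_matD[OF A] by (simp add: ulb_def lrb_def del: One_nat_def)
next
  case (Suc r)
  have P: "A ^\<^sub>m r \<in> carrier_mat n n" using A by simp
  show ?case using Suc llz_mult[OF P A kn _ zA] ulb_mult[OF P A kn _ zA] lrb_mult[OF P A kn _ zA]
    by simp
qed

lemma trace_split:
  assumes A: "A \<in> carrier_mat n n" and kn: "k \<le> n"
  shows "mat_trace A = mat_trace (ulb k A) + mat_trace (lrb n k A)"
proof -
  have "mat_trace A = (\<Sum>i<n. A $$ (i,i))" unfolding mat_trace_def using A by simp
  also have "\<dots> = (\<Sum>i<k. A $$ (i,i)) + (\<Sum>i\<in>{k..<n}. A $$ (i,i))"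
    using kn by (metis atLeast0LessThan sum.atLeastLessThan_concat zero_le)
  also have "(\<Sum>i\<in>{k..<n}. A $$ (i,i)) = (\<Sum>i<n-k. A $$ (i+k,i+k))"
  proof -
    have "{k..<n} = (\<lambda>l. l + k) ` {..<n-k}" using kn by (rule shift_img)
    thus ?thesis by (simp add: sum.reindex)
  qed
  finally show ?thesis unfolding mat_trace_def ulb_def lrb_def by simp
qed

lemma unip:
  fixes A :: "'a::field_char_0 mat"
  assumes A: "A \<in> carrier_mat n n" and kn: "k \<le> n" and zA: "llz n k A"
    and u: "ulb k A = 1\<^sub>m k" and l: "lrb n k A = 1\<^sub>m (n-k)"
    and p: "A ^\<^sub>m m = 1\<^sub>m n" and m: "m > 0"
  shows "A = 1\<^sub>m n"
proof -
  define e where "e = (\<lambda>i j. A $$ (i,j) - (if i = j then 1 else 0))"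
  have Ae: "A $$ (i,j) = (if i = j then 1 else 0) + e i j" for i j unfolding e_def by simp
  have enz: "e i j = 0" if "i < n" "j < n" "\<not> (i < k \<and> k \<le> j)" for i j
  proof (cases "i < k")
    case True
    hence "j < k" using that by auto
    have "ulb k A $$ (i,j) = A $$ (i,j)" using True \<open>j < k\<close> by (simp add: ulb_def)
    thus ?thesis using u True \<open>j < k\<close> unfolding e_def by simp
  next
    case False
    show ?thesis
    proof (cases "j < k")
      case True
      thus ?thesis using zA False that unfolding llz_def e_def by auto
    next
      case F2: False
      have "lrb n k A $$ (i-k,j-k) = A $$ (i,j)" using False F2 that by (simp add: lrb_def)
      moreover have "(i - k = j - k) = (i = j)" using False F2 by auto
      ultimately show ?thesis using l False F2 that unfolding e_def by simp
    qed
  qed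
  have ee: "(\<Sum>l<n. e i l * e l j) = 0" if "i < n" "j < n" for i j
  proof (rule sum.neutral, intro ballI)
    fix l assume "l \<in> {..<n}"
    hence ln: "l < n" by simp
    show "e i l * e l j = 0"
    proof (cases "i < k \<and> k \<le> l")
      case True thus ?thesis using enz[of l j] ln that by simp
    next
      case False thus ?thesis using enz[of i l] ln that by simp
    qed
  qed
  have pw: "\<forall>i j. i < n \<and> j < n \<longrightarrow> (A ^\<^sub>m r) $$ (i,j) = (if i = j then 1 else 0) + of_nat r * e i j" for r
  proof (induction r)
    case 0
    then show ?case using A by (simp add: e_def)
  next
    case (Suc r)
    show ?case
    proof (intro allI impI)
      fix i j assume ij: "i < n \<and> j < n"
      have Ar: "A ^\<^sub>m r \<in> carrier_mat n n" using A by simp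
      have "(A ^\<^sub>m Suc r) $$ (i,j) = (\<Sum>l<n. (A ^\<^sub>m r) $$ (i,l) * A $$ (l,j))"
        using mult_entry[OF Ar A] ij by simp
      also have "\<dots> = (\<Sum>l<n. ((if i = l then 1 else 0) + of_nat r * e i l) * ((if l = j then 1 else 0) + e l j))"
        using Suc ij by (intro sum.cong) (auto simp: Ae)
      also have "\<dots> = (\<Sum>l<n. (if i = l then (if l = j then 1 else 0) + e l j else 0))
          + (\<Sum>l<n. (if l = j then of_nat r * e i l else 0)) + of_nat r * (\<Sum>l<n. e i l * e l j)"
      proof -
        have "\<And>l. ((if i = l then 1 else 0) + of_nat r * e i l) * ((if l = j then 1 else 0) + e l j)
           = (if i = l then (if l = j then 1 else 0) + e l j else 0) + (if l = j then of_nat r * e i l else 0)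
             + of_nat r * (e i l * e l j)"
          by (simp add: algebra_simps)
        hence "(\<Sum>l<n. ((if i = l then 1 else 0) + of_nat r * e i l) * ((if l = j then 1 else 0) + e l j))
           = (\<Sum>l<n. (if i = l then (if l = j then 1 else 0) + e l j else 0) + (if l = j then of_nat r * e i l else 0)
             + of_nat r * (e i l * e l j))" by simp
        also have "\<dots> = (\<Sum>l<n. (if i = l then (if l = j then 1 else 0) + e l j else 0))
          + (\<Sum>l<n. (if l = j then of_nat r * e i l else 0)) + (\<Sum>l<n. of_nat r * (e i l * e l j))"
          by (simp add: sum.distrib)
        finally show ?thesis by (simp add: sum_distrib_left)
      qed
      also have "\<dots> = (if i = j then 1 else 0) + e i j + of_nat r * e i j"
        using ij ee[of i j] by simp
      finally show "(A ^\<^sub>m Suc r) $$ (i,j) = (if i = j then 1 else 0) + of_nat (Suc r) * e i j"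
        by (simp add: algebra_simps)
    qed
  qed
  show ?thesis
  proof (rule eq_matI)
    fix i j assume ij: "i < dim_row (1\<^sub>m n :: 'a mat)" "j < dim_col (1\<^sub>m n :: 'a mat)"
    hence ij: "i < n" "j < n" by auto
    have "(A ^\<^sub>m m) $$ (i,j) = (1\<^sub>m n :: 'a mat) $$ (i,j)" using p by simp
    hence "of_nat m * e i j = 0" using pw[of m] ij by simp
    hence "e i j = 0" using m by simp
    thus "A $$ (i,j) = (1\<^sub>m n :: 'a mat) $$ (i,j)" using ij unfolding e_def by simp
  qed (insert A, auto)
qed

context vec_space begin
lemma KL_basis:
  fixes S :: "'a vec set"
  assumes SC: "S \<subseteq> carrier_vec n" and S0: "0\<^sub>v n \<in> S"
    and Sadd: "\<forall>v\<in>S. \<forall>w\<in>S. v + w \<in> S" and Ssm: "\<forall>c. \<forall>v\<in>S. c \<cdot>\<^sub>v v \<in> S"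
  shows "\<exists>A B. A \<subseteq> B \<and> finite B \<and> card B = n \<and> span A = S \<and> span B = carrier_vec n
      \<and> B \<subseteq> carrier_vec n \<and> \<not> lin_dep B"
proof -
  have sub: "submodule class_ring S V"
    unfolding submodule_def using SC S0 Sadd Ssm by (auto intro: module_axioms)
  have bnd: "\<And>A. A \<subseteq> carrier_vec n \<and> lin_indpt A \<Longrightarrow> finite A \<and> card A \<le> n"
    using li_le_dim[OF fin_dim] dim_is_n by auto
  have li0: "lin_indpt {}" unfolding lin_dep_def by auto
  obtain A where A: "finite A" "maximal A (\<lambda>A. A \<subseteq> S \<and> lin_indpt A)"
    using maximal_exists[of "\<lambda>A. A \<subseteq> S \<and> lin_indpt A" n "{}"] bnd SC li0 by blast
  have AS: "A \<subseteq> S" and Ali: "lin_indpt A" using A unfolding maximal_def by auto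
  have AC: "A \<subseteq> carrier_vec n" using AS SC by auto
  have spA: "span A = S"
  proof
    show "span A \<subseteq> S" using span_is_subset[OF AS sub] .
    show "S \<subseteq> span A"
    proof
      fix w :: "'a vec" assume w: "w \<in> S"
      show "w \<in> span A"
      proof (cases "w \<in> A")
        case True thus ?thesis using in_own_span[OF AC] by auto
      next
        case False
        show ?thesis
        proof (rule ccontr)
          assume "w \<notin> span A"
          hence "lin_indpt (A \<union> {w})" using lin_dep_iff_in_span[OF AC Ali _ False] w SC by auto
          moreover have "A \<union> {w} \<subseteq> S" using AS w by auto
          ultimately have "A \<union> {w} = A" using A(2) unfolding maximal_def by blast
          thus False using False by auto
        qed
      qed
    qed
  qed
  obtain B where B: "finite B" "maximal B (\<lambda>B. A \<subseteq> B \<and> B \<subseteq> carrier_vec n \<and> lin_indpt B)"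
    using maximal_exists[of "\<lambda>B. A \<subseteq> B \<and> B \<subseteq> carrier_vec n \<and> lin_indpt B" n A] bnd AC Ali by blast
  have AB: "A \<subseteq> B" and BC: "B \<subseteq> carrier_vec n" and Bli: "lin_indpt B" using B unfolding maximal_def by auto
  have spB: "span B = carrier_vec n"
  proof
    show "span B \<subseteq> carrier_vec n" using span_is_subset2[OF BC] by simp
    show "carrier_vec n \<subseteq> span B"
    proof
      fix w :: "'a vec" assume w: "w \<in> carrier_vec n"
      show "w \<in> span B"
      proof (cases "w \<in> B")
        case True thus ?thesis using in_own_span[OF BC] by auto
      next
        case False
        show ?thesis
        proof (rule ccontr)
          assume "w \<notin> span B"
          hence "lin_indpt (B \<union> {w})" using lin_dep_iff_in_span[OF BC Bli _ False] w by auto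
          moreover have "A \<subseteq> B \<union> {w}" "B \<union> {w} \<subseteq> carrier_vec n" using AB BC w by auto
          ultimately have "B \<union> {w} = B" using B(2) unfolding maximal_def by blast
          thus False using False by auto
        qed
      qed
    qed
  qed
  have "basis B" unfolding basis_def using spB Bli BC by auto
  hence "card B = n" using dim_basis[OF B(1)] dim_is_n by simp
  thus ?thesis using AB B(1) spA spB BC Bli by blast
qed

lemma KL:
  fixes S :: "'a vec set"
  assumes SC: "S \<subseteq> carrier_vec n" and S0: "0\<^sub>v n \<in> S"
    and Sadd: "\<forall>v\<in>S. \<forall>w\<in>S. v + w \<in> S" and Ssm: "\<forall>c. \<forall>v\<in>S. c \<cdot>\<^sub>v v \<in> S"
    and Sn0: "S \<noteq> {0\<^sub>v n}" and Snf: "S \<noteq> carrier_vec n"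
  shows "\<exists>k P P'. 0 < k \<and> k < n \<and> P \<in> carrier_mat n n \<and> P' \<in> carrier_mat n n \<and>
     P * P' = 1\<^sub>m n \<and> P' * P = 1\<^sub>m n \<and> (\<forall>j<k. col P j \<in> S) \<and>
     (\<forall>v\<in>S. \<forall>i. k \<le> i \<and> i < n \<longrightarrow> (P' *\<^sub>v v) $ i = 0)"
proof -
  obtain A B where AB: "A \<subseteq> B" and fB: "finite B" and cB: "card B = n" and spA: "span A = S"
    and spB: "span B = carrier_vec n" and BC: "B \<subseteq> carrier_vec n"
    using KL_basis[OF SC S0 Sadd Ssm] by blast
  have fA: "finite A" using AB fB finite_subset by auto
  obtain as where as: "set as = A" "distinct as" using finite_distinct_list[OF fA] by blast
  obtain cs where cs: "set cs = B - A" "distinct cs" using finite_distinct_list[of "B - A"] fB by blast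
  define bs where "bs = as @ cs"
  define k where "k = length as"
  have bsB: "set bs = B" using as cs AB unfolding bs_def by auto
  have bsd: "distinct bs" using as cs unfolding bs_def by auto
  have lbs: "length bs = n" using distinct_card[OF bsd] bsB cB by simp
  have kA: "k = card A" using distinct_card[OF as(2)] as(1) k_def by simp
  have AC: "A \<subseteq> carrier_vec n" using AB BC by auto
  have k0: "0 < k"
  proof (rule ccontr)
    assume "\<not> 0 < k"
    hence "A = {}" using kA fA by auto
    hence "S = {0\<^sub>v n}" using spA span_empty by simp
    thus False using Sn0 by simp
  qed
  have kn: "k < n"
  proof (rule ccontr)
    assume "\<not> k < n"
    moreover have "k \<le> n" using kA cB card_mono[OF fB AB] by simp
    ultimately have "card A = card B" using kA cB by simp
    hence "A = B" using card_subset_eq[OF fB AB] by simp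
    thus False using spA spB Snf by simp
  qed
  define P where "P = mat_of_cols n bs"
  have P: "P \<in> carrier_mat n n" unfolding P_def using mat_of_cols_carrier(1)[of n bs] lbs by simp
  have bsC: "set bs \<subseteq> carrier_vec n" using bsB BC by simp
  have repr: "\<exists>c. v = P *\<^sub>v vec n c" if v: "v \<in> carrier_vec n" for v
  proof -
    have "v \<in> span_list bs" using span_list_as_span[OF bsC] bsB spB v by simp
    then obtain c where "v = lincomb_list c bs" by (rule in_span_listE)
    also have "\<dots> = mat_of_cols n bs *\<^sub>v vec (length bs) c"
      by (rule lincomb_list_as_mat_mult, insert bsC, auto)
    also have "\<dots> = P *\<^sub>v vec n c" unfolding P_def lbs ..
    finally show ?thesis by blast
  qed
  define cf where "cf = (\<lambda>j. SOME c. unit_vec n j = P *\<^sub>v vec n c)"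
  have cf: "unit_vec n j = P *\<^sub>v vec n (cf j)" for j
  proof -
    have "\<exists>c. unit_vec n j = P *\<^sub>v vec n c" by (rule repr) simp
    thus ?thesis unfolding cf_def by (rule someI_ex)
  qed
  define P' where "P' = mat n n (\<lambda>(i,j). cf j i)"
  have P': "P' \<in> carrier_mat n n" unfolding P'_def by simp
  have colP': "col P' j = vec n (cf j)" if "j < n" for j
    unfolding P'_def using that by (auto simp: col_def)
  have PP': "P * P' = 1\<^sub>m n"
  proof (rule mat_col_eqI)
    fix j assume j: "j < dim_col (1\<^sub>m n :: 'a mat)"
    hence "col (P * P') j = P *\<^sub>v col P' j" using col_mult2[OF P P'] by simp
    also have "\<dots> = unit_vec n j" using colP' j cf by simp
    finally show "col (P * P') j = col (1\<^sub>m n) j" using j by simp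
  qed (insert P P', auto)
  have P'P: "P' * P = 1\<^sub>m n" using mat_mult_left_right_inverse[OF P P' PP'] .
  have colS: "\<forall>j<k. col P j \<in> S"
  proof (intro allI impI)
    fix j assume j: "j < k"
    have "col P j = bs ! j" unfolding P_def using j kn lbs bsC by (intro col_mat_of_cols) auto
    also have "\<dots> = as ! j" unfolding bs_def using j k_def by (simp add: nth_append)
    also have "\<dots> \<in> A" using as j k_def by auto
    finally show "col P j \<in> S" using in_own_span[OF AC] spA by auto
  qed
  have zero: "\<forall>v\<in>S. \<forall>i. k \<le> i \<and> i < n \<longrightarrow> (P' *\<^sub>v v) $ i = 0"
  proof (intro ballI allI impI)
    fix v i assume v: "v \<in> S" and i: "k \<le> i \<and> i < n"
    have asC: "set as \<subseteq> carrier_vec n" using as AC by simp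
    have "v \<in> span_list as" using span_list_as_span[OF asC] as spA v by simp
    then obtain c where vc: "v = lincomb_list c as" by (rule in_span_listE)
    define d where "d = vec n (\<lambda>j. if j < k then c j else 0)"
    have "v = mat_of_cols n as *\<^sub>v vec k c" unfolding vc k_def
      by (rule lincomb_list_as_mat_mult, insert asC, auto)
    also have "\<dots> = P *\<^sub>v d"
    proof (rule eq_vecI)
      fix r assume r: "r < dim_vec (P *\<^sub>v d)"
      hence r: "r < n" using P by simp
      have "(P *\<^sub>v d) $ r = (\<Sum>j<n. bs ! j $ r * d $ j)"
        using r lbs unfolding P_def d_def by (auto simp: mult_mat_vec_def scalar_prod_def lessThan_atLeast0 mat_of_cols_def intro!: sum.cong)
      also have "\<dots> = (\<Sum>j<k. bs ! j $ r * d $ j)"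
        by (rule sum.mono_neutral_right, insert kn, auto simp: d_def)
      also have "\<dots> = (\<Sum>j<k. as ! j $ r * c j)"
        by (rule sum.cong, insert kn, auto simp: d_def bs_def k_def nth_append)
      also have "\<dots> = (mat_of_cols n as *\<^sub>v vec k c) $ r"
        using r unfolding k_def by (auto simp: mult_mat_vec_def scalar_prod_def lessThan_atLeast0 mat_of_cols_def intro!: sum.cong)
      finally show "(mat_of_cols n as *\<^sub>v vec k c) $ r = (P *\<^sub>v d) $ r" by simp
    qed (insert P, auto simp: d_def k_def)
    finally have "P' *\<^sub>v v = P' *\<^sub>v (P *\<^sub>v d)" by simp
    also have "\<dots> = (P' * P) *\<^sub>v d" using assoc_mult_mat_vec[OF P' P, of d] by (simp add: d_def)
    also have "\<dots> = d" unfolding P'P by (simp add: d_def)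
    finally show "(P' *\<^sub>v v) $ i = 0" using i by (simp add: d_def)
  qed
  show ?thesis using k0 kn P P' PP' P'P colS zero by blast
qed
end

lemma TE:
  fixes x y :: complex and a b :: real
  assumes xa: "cmod x \<le> a" and yb: "cmod y \<le> b" and s: "cmod (x + y) = a + b" and a: "a > 0" and b: "b > 0"
  shows "cmod x = a \<and> cmod y = b \<and> x / of_real a = y / of_real b"
proof -
  have "cmod (x + y) \<le> cmod x + cmod y" by (rule norm_triangle_ineq)
  hence xa': "cmod x = a" and yb': "cmod y = b" using xa yb s by auto
  have e: "cmod (x + y) ^ 2 = cmod x ^ 2 + cmod y ^ 2 + 2 * Re (x * cnj y)"
    by (simp add: cmod_power2 power2_sum algebra_simps)
  hence R: "Re (x * cnj y) = a * b" using xa' yb' s by (simp add: power2_sum algebra_simps)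
  have "cmod (x * cnj y) = a * b" using xa' yb' by (simp add: norm_mult)
  hence z: "x * cnj y = complex_of_real (a * b)" using R
    by (metis Im_eq_0 abs_norm_cancel complex_is_Real_iff of_real_Re abs_of_nonneg norm_ge_zero)
  have "x * (cnj y * y) = complex_of_real (a * b) * y" using z by (simp add: algebra_simps)
  moreover have "cnj y * y = complex_of_real (b ^ 2)" using yb' complex_norm_square[of y] by (simp add: mult.commute)
  ultimately have "x * complex_of_real (b ^ 2) = complex_of_real (a * b) * y" by simp
  hence "x * complex_of_real b = complex_of_real a * y" using b
    by (simp add: power2_eq_square algebra_simps)
  hence "x / of_real a = y / of_real b" using a b by (simp add: field_simps)
  thus ?thesis using xa' yb' by simp
qed


lemma mat_trace_comm:
  assumes A: "A \<in> carrier_mat n n" and B: "B \<in> carrier_mat n n"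
  shows "mat_trace (A * B) = mat_trace (B * A)"
proof -
  have "mat_trace (A * B) = (\<Sum>i<n. \<Sum>l<n. A $$ (i,l) * B $$ (l,i))"
    unfolding mat_trace_def using A B by (intro sum.cong) (auto simp: mult_entry[OF A B, symmetric])
  also have "\<dots> = (\<Sum>l<n. \<Sum>i<n. B $$ (l,i) * A $$ (i,l))"
    by (subst sum.swap) (simp add: mult.commute)
  also have "\<dots> = mat_trace (B * A)"
    unfolding mat_trace_def using A B by (intro sum.cong) (auto simp: mult_entry[OF B A, symmetric])
  finally show ?thesis .
qed

lemma smult_smult_mat': "a \<cdot>\<^sub>m (b \<cdot>\<^sub>m M) = (a * b :: 'a :: comm_ring_1) \<cdot>\<^sub>m M"
  by (rule eq_matI) auto

lemma smult_pow:
  assumes A: "(A :: 'a :: comm_ring_1 mat) \<in> carrier_mat n n"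
  shows "(c \<cdot>\<^sub>m A) ^\<^sub>m r = c ^ r \<cdot>\<^sub>m (A ^\<^sub>m r)"
proof (induction r)
  case 0
  then show ?case using A by (auto intro!: eq_matI)
next
  case (Suc r)
  have Ar: "A ^\<^sub>m r \<in> carrier_mat n n" using A by simp
  have "(c \<cdot>\<^sub>m A) ^\<^sub>m Suc r = (c ^ r \<cdot>\<^sub>m (A ^\<^sub>m r)) * (c \<cdot>\<^sub>m A)" using Suc by simp
  also have "\<dots> = c ^ r \<cdot>\<^sub>m ((A ^\<^sub>m r) * (c \<cdot>\<^sub>m A))"
    using mult_smult_assoc_mat[OF Ar smult_carrier_mat[OF A]] by simp
  also have "\<dots> = c ^ r \<cdot>\<^sub>m (c \<cdot>\<^sub>m ((A ^\<^sub>m r) * A))"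
    using mult_smult_distrib[OF Ar A] by simp
  finally show ?case by (simp add: smult_smult_mat' mult.commute)
qed

lemma smult_one_mult:
  assumes B: "(B :: 'a :: comm_ring_1 mat) \<in> carrier_mat n nc"
  shows "(c \<cdot>\<^sub>m 1\<^sub>m n) * B = c \<cdot>\<^sub>m B"
  using mult_smult_assoc_mat[of "1\<^sub>m n" n n B nc c] B by simp

lemma root_unity_norm:
  fixes c :: complex
  assumes "c ^ m = 1" "m > 0"
  shows "cmod c = 1"
proof -
  have "cmod c ^ m = 1" using assms(1) by (metis norm_one norm_power)
  hence "cmod c ^ m = 1 ^ m" by simp
  thus ?thesis using assms(2) power_eq_imp_eq_base[of "cmod c" m 1] by simp
qed

lemma one_pow_mat[simp]: "(1\<^sub>m n :: 'a::semiring_1 mat) ^\<^sub>m r = 1\<^sub>m n"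
  by (induction r) auto

lemma eigen_line_subspace:
  fixes A :: "complex mat" and v :: "complex vec"
  assumes A: "A \<in> carrier_mat n n" and v: "v \<in> carrier_vec n" and v0: "v \<noteq> 0\<^sub>v n"
    and ev: "A *\<^sub>v v = \<mu> \<cdot>\<^sub>v v" and n2: "n \<ge> 2"
  defines "S \<equiv> range (\<lambda>c. c \<cdot>\<^sub>v v)"
  shows "S \<subseteq> carrier_vec n" "0\<^sub>v n \<in> S" "\<forall>x\<in>S. \<forall>y\<in>S. x + y \<in> S" "\<forall>c. \<forall>x\<in>S. c \<cdot>\<^sub>v x \<in> S"
    "S \<noteq> {0\<^sub>v n}" "S \<noteq> carrier_vec n" "\<forall>x\<in>S. A *\<^sub>v x \<in> S"
proof -
  show "S \<subseteq> carrier_vec n" unfolding S_def using v by auto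
  have "0\<^sub>v n = 0 \<cdot>\<^sub>v v" using v by auto
  thus "0\<^sub>v n \<in> S" unfolding S_def by auto
  show "\<forall>x\<in>S. \<forall>y\<in>S. x + y \<in> S" unfolding S_def
    by (auto simp: add_smult_distrib_vec[symmetric])
  show "\<forall>c. \<forall>x\<in>S. c \<cdot>\<^sub>v x \<in> S" unfolding S_def
    by (auto simp: smult_smult_assoc)
  have "v \<in> S" unfolding S_def by (auto intro!: image_eqI[of _ _ 1])
  thus "S \<noteq> {0\<^sub>v n}" using v0 by auto
  show "S \<noteq> carrier_vec n"
  proof
    assume SC: "S = carrier_vec n"
    have "unit_vec n 0 \<in> S" "unit_vec n 1 \<in> S" unfolding SC by auto
    then obtain a b where a: "unit_vec n 0 = a \<cdot>\<^sub>v v" and b: "unit_vec n 1 = b \<cdot>\<^sub>v v"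
      unfolding S_def by auto
    have "1 = a * v $ 0" using arg_cong[OF a, of "\<lambda>w. w $ 0"] n2 v by simp
    hence "v $ 0 \<noteq> 0" by auto
    moreover have "0 = b * v $ 0" using arg_cong[OF b, of "\<lambda>w. w $ 0"] n2 v by simp
    ultimately have "b = 0" by simp
    moreover have "1 = b * v $ 1" using arg_cong[OF b, of "\<lambda>w. w $ 1"] n2 v by simp
    ultimately show False by simp
  qed
  show "\<forall>x\<in>S. A *\<^sub>v x \<in> S" unfolding S_def
  proof
    fix x assume "x \<in> range (\<lambda>c. c \<cdot>\<^sub>v v)"
    then obtain c where x: "x = c \<cdot>\<^sub>v v" by auto
    have "A *\<^sub>v x = c \<cdot>\<^sub>v (A *\<^sub>v v)" unfolding x using mult_mat_vec[OF A v] .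
    also have "\<dots> = (c * \<mu>) \<cdot>\<^sub>v v" unfolding ev by (simp add: smult_smult_assoc)
    finally show "A *\<^sub>v x \<in> range (\<lambda>c. c \<cdot>\<^sub>v v)" by auto
  qed
qed

lemma conj_llz:
  fixes M P P' :: "'a::field mat"
  assumes M: "M \<in> carrier_mat n n" and P: "P \<in> carrier_mat n n" and P': "P' \<in> carrier_mat n n"
    and colS: "\<forall>j<k. col P j \<in> S" and SC: "S \<subseteq> carrier_vec n"
    and zero: "\<forall>v\<in>S. \<forall>i. k \<le> i \<and> i < n \<longrightarrow> (P' *\<^sub>v v) $ i = 0"
    and inv: "\<forall>v\<in>S. M *\<^sub>v v \<in> S" and kn: "k \<le> n"
  shows "llz n k (P' * M * P)"
  unfolding llz_def
proof (intro allI impI)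
  fix i j assume ij: "k \<le> i \<and> i < n \<and> j < k"
  have cj: "col P j \<in> carrier_vec n" using colS ij SC by auto
  have "(P' * M * P) $$ (i,j) = row (P' * M) i \<bullet> col P j"
    by (rule index_mult_mat(1)) (use ij kn P P' M in auto)
  also have "\<dots> = ((P' * M) *\<^sub>v col P j) $ i"
    by (rule index_mult_mat_vec[symmetric]) (use ij kn P P' M in auto)
  also have "\<dots> = (P' *\<^sub>v (M *\<^sub>v col P j)) $ i"
    using assoc_mult_mat_vec[OF P' M cj] by simp
  also have "\<dots> = 0" using zero inv colS ij by auto
  finally show "(P' * M * P) $$ (i,j) = 0" .
qed

lemma L1:
  fixes A :: "complex mat"
  assumes "A \<in> carrier_mat n n" "A ^\<^sub>m m = 1\<^sub>m n" "m > 0"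
  shows "cmod (mat_trace A) \<le> n \<and> (cmod (mat_trace A) = n \<longrightarrow> (\<exists>c. A = c \<cdot>\<^sub>m 1\<^sub>m n))"
  using assms
proof (induction n arbitrary: A rule: less_induct)
  case (less n A)
  note A = less.prems(1) and Am = less.prems(2) and m = less.prems(3)
  consider "n = 0" | "n = 1" | "n \<ge> 2" by linarith
  then show ?case
  proof cases
    case 1
    have "mat_trace A = 0" unfolding mat_trace_def using A 1 by simp
    moreover have "A = 0 \<cdot>\<^sub>m 1\<^sub>m n" using A 1 by (intro eq_matI) auto
    ultimately show ?thesis by auto
  next
    case 2
    define c where "c = A $$ (0,0)"
    have Ac: "A = c \<cdot>\<^sub>m 1\<^sub>m n" using A 2 unfolding c_def by (intro eq_matI) auto
    have "(c \<cdot>\<^sub>m 1\<^sub>m n) ^\<^sub>m m = c ^ m \<cdot>\<^sub>m 1\<^sub>m n" using smult_pow[of "1\<^sub>m n" n c m] by simp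
    hence "c ^ m \<cdot>\<^sub>m 1\<^sub>m n = (1\<^sub>m n :: complex mat)" using Am Ac by simp
    hence "(c ^ m \<cdot>\<^sub>m 1\<^sub>m n) $$ (0,0) = (1\<^sub>m n :: complex mat) $$ (0,0)" by simp
    hence "c ^ m = 1" using 2 by simp
    hence "cmod c = 1" using root_unity_norm m by blast
    moreover have "mat_trace A = c" unfolding mat_trace_def using A 2 c_def by simp
    ultimately show ?thesis using Ac 2 by auto
  next
    case 3
    hence n0: "n > 0" by simp
    obtain \<mu> where "\<mu> \<in> spectrum A" using spectrum_non_empty[OF A n0] by auto
    then obtain v where v: "v \<in> carrier_vec n" "v \<noteq> 0\<^sub>v n" "A *\<^sub>v v = \<mu> \<cdot>\<^sub>v v"
      unfolding spectrum_def eigenvalue_def eigenvector_def using A by auto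
    define S where "S = range (\<lambda>c. c \<cdot>\<^sub>v v)"
    note Sp = eigen_line_subspace[OF A v 3, folded S_def]
    obtain k P P' where k0: "0 < k" and kn: "k < n" and P: "P \<in> carrier_mat n n" and P': "P' \<in> carrier_mat n n"
      and PP': "P * P' = 1\<^sub>m n" and P'P: "P' * P = 1\<^sub>m n" and colS: "\<forall>j<k. col P j \<in> S"
      and zero: "\<forall>v\<in>S. \<forall>i. k \<le> i \<and> i < n \<longrightarrow> (P' *\<^sub>v v) $ i = 0"
      using vec_space.KL[OF Sp(1-6)] by blast
    define Q where "Q = P' * A * P"
    have Q: "Q \<in> carrier_mat n n" unfolding Q_def using P P' A by simp
    have zQ: "llz n k Q" unfolding Q_def by (rule conj_llz[OF A P P' colS Sp(1) zero Sp(7)], insert kn, simp)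
    have sw: "similar_mat_wit Q A P' P"
      unfolding similar_mat_wit_def Let_def Q_def using P P' A PP' P'P by auto
    have Qm: "Q ^\<^sub>m m = 1\<^sub>m n"
      using similar_mat_wit_pow_id[OF sw, of m] Am P P' P'P by simp
    have AQ: "A = P * Q * P'"
    proof -
      have "P * Q * P' = (P * P') * A * (P * P')" unfolding Q_def using P P' A
        by (simp add: assoc_mult_mat[of _ n n _ n _ n])
      thus ?thesis using PP' A by simp
    qed
    have trAQ: "mat_trace A = mat_trace Q"
    proof -
      have "mat_trace Q = mat_trace ((P' * A) * P)" unfolding Q_def ..
      also have "\<dots> = mat_trace (P * (P' * A))" using mat_trace_comm[of "P' * A" n P] P P' A by simp
      also have "\<dots> = mat_trace ((P * P') * A)" using P P' A by simp
      finally show ?thesis using PP' A by simp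
    qed
    define U where "U = ulb k Q"
    define L where "L = lrb n k Q"
    have bp: "llz n k (Q ^\<^sub>m m) \<and> ulb k (Q ^\<^sub>m m) = U ^\<^sub>m m \<and> lrb n k (Q ^\<^sub>m m) = L ^\<^sub>m m"
      unfolding U_def L_def using block_pow[OF Q _ zQ] kn by simp
    have Um: "U ^\<^sub>m m = 1\<^sub>m k"
    proof -
      have "U ^\<^sub>m m = ulb k (Q ^\<^sub>m m)" using bp by simp
      also have "\<dots> = 1\<^sub>m k" using Qm ulb_one[of k n] kn by simp
      finally show ?thesis .
    qed
    have Lm: "L ^\<^sub>m m = 1\<^sub>m (n-k)"
    proof -
      have "L ^\<^sub>m m = lrb n k (Q ^\<^sub>m m)" using bp by simp
      also have "\<dots> = 1\<^sub>m (n-k)" using Qm lrb_one[of n k] by simp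
      finally show ?thesis .
    qed
    have U: "U \<in> carrier_mat k k" and L: "L \<in> carrier_mat (n-k) (n-k)" unfolding U_def L_def by auto
    have IHU: "cmod (mat_trace U) \<le> k \<and> (cmod (mat_trace U) = k \<longrightarrow> (\<exists>c. U = c \<cdot>\<^sub>m 1\<^sub>m k))"
      using less.IH[OF kn U Um m] .
    have IHL: "cmod (mat_trace L) \<le> (n-k) \<and> (cmod (mat_trace L) = (n-k) \<longrightarrow> (\<exists>c. L = c \<cdot>\<^sub>m 1\<^sub>m (n-k)))"
      using less.IH[OF _ L Lm m] k0 kn by simp
    have trs: "mat_trace A = mat_trace U + mat_trace L"
      unfolding trAQ U_def L_def using trace_split[OF Q] kn by simp
    have bound: "cmod (mat_trace A) \<le> n"
    proof -
      have "cmod (mat_trace A) \<le> cmod (mat_trace U) + cmod (mat_trace L)" unfolding trs by (rule norm_triangle_ineq)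
      also have "\<dots> \<le> real k + real (n - k)" using IHU IHL by simp
      finally show ?thesis using kn by simp
    qed
    have eq: "\<exists>c. A = c \<cdot>\<^sub>m 1\<^sub>m n" if eqn: "cmod (mat_trace A) = n"
    proof -
      have te: "cmod (mat_trace U) = k \<and> cmod (mat_trace L) = real (n-k) \<and>
          mat_trace U / of_real (real k) = mat_trace L / of_real (real (n - k))"
        by (rule TE) (use IHU IHL eqn trs k0 kn in auto)
      obtain a where a: "U = a \<cdot>\<^sub>m 1\<^sub>m k" using IHU te by auto
      obtain b where b: "L = b \<cdot>\<^sub>m 1\<^sub>m (n-k)" using IHL te by auto
      have trU: "mat_trace U = of_nat k * a" unfolding a mat_trace_def by simp
      have trL: "mat_trace L = of_nat (n-k) * b" unfolding b mat_trace_def by simp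
      have ab: "a = b" using te k0 kn unfolding trU trL by simp
      have "(a \<cdot>\<^sub>m 1\<^sub>m k) ^\<^sub>m m = a ^ m \<cdot>\<^sub>m 1\<^sub>m k" using smult_pow[of "1\<^sub>m k" k a m] by simp
      hence "(a ^ m \<cdot>\<^sub>m 1\<^sub>m k) $$ (0,0) = (1\<^sub>m k :: complex mat) $$ (0,0)" using Um a by simp
      hence am: "a ^ m = 1" using k0 by simp
      hence a0: "a \<noteq> 0" using m by (metis power_0_left zero_neq_one gr_implies_not0)
      define Q' where "Q' = inverse a \<cdot>\<^sub>m Q"
      have Q': "Q' \<in> carrier_mat n n" unfolding Q'_def using Q by simp
      have zQ': "llz n k Q'" using zQ Q unfolding Q'_def llz_def by auto
      have uQ': "ulb k Q' = 1\<^sub>m k"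
      proof (rule eq_matI)
        fix i j assume "i < dim_row (1\<^sub>m k :: complex mat)" "j < dim_col (1\<^sub>m k :: complex mat)"
        hence ij: "i < k" "j < k" by auto
        have "U $$ (i,j) = Q $$ (i,j)" unfolding U_def ulb_def using ij by simp
        thus "ulb k Q' $$ (i,j) = (1\<^sub>m k :: complex mat) $$ (i,j)"
          unfolding Q'_def ulb_def using ij kn Q a0 a by auto
      qed (auto simp: ulb_def)
      have lQ': "lrb n k Q' = 1\<^sub>m (n-k)"
      proof (rule eq_matI)
        fix i j assume "i < dim_row (1\<^sub>m (n-k) :: complex mat)" "j < dim_col (1\<^sub>m (n-k) :: complex mat)"
        hence ij: "i < n-k" "j < n-k" by auto
        have "L $$ (i,j) = Q $$ (i+k,j+k)" unfolding L_def lrb_def using ij by simp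
        thus "lrb n k Q' $$ (i,j) = (1\<^sub>m (n-k) :: complex mat) $$ (i,j)"
          unfolding Q'_def lrb_def using ij kn Q a0 b ab by auto
      qed (auto simp: lrb_def)
      have "Q' ^\<^sub>m m = (inverse a) ^ m \<cdot>\<^sub>m 1\<^sub>m n" unfolding Q'_def using smult_pow[OF Q] Qm by simp
      also have "(inverse a) ^ m = 1" using am by (simp add: power_inverse)
      moreover have "1 \<cdot>\<^sub>m (1\<^sub>m n :: complex mat) = 1\<^sub>m n" by (rule eq_matI) auto
      ultimately have Q'm: "Q' ^\<^sub>m m = 1\<^sub>m n" by simp
      have "Q' = 1\<^sub>m n" using unip[OF Q' _ zQ' uQ' lQ' Q'm m] kn by simp
      hence "a \<cdot>\<^sub>m Q' = a \<cdot>\<^sub>m 1\<^sub>m n" by simp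
      moreover have "a \<cdot>\<^sub>m Q' = Q" unfolding Q'_def smult_smult_mat' using a0 Q
        by (intro eq_matI) auto
      ultimately have Qa: "Q = a \<cdot>\<^sub>m 1\<^sub>m n" by simp
      have "P * (a \<cdot>\<^sub>m 1\<^sub>m n) = a \<cdot>\<^sub>m (P * 1\<^sub>m n)" by (rule mult_smult_distrib[OF P one_carrier_mat])
      also have "\<dots> = a \<cdot>\<^sub>m P" using P by simp
      finally have "A = (a \<cdot>\<^sub>m P) * P'" using AQ Qa by simp
      also have "\<dots> = a \<cdot>\<^sub>m (P * P')" by (rule mult_smult_assoc_mat[OF P P'])
      finally show ?thesis using PP' by auto
    qed
    show ?thesis using bound eq by auto
  qed
qed

lemma rep_carrier: "is_rep G n \<rho> \<Longrightarrow> g \<in> carrier G \<Longrightarrow> \<rho> g \<in> carrier_mat n n"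
  unfolding is_rep_def by auto
lemma rep_one: "is_rep G n \<rho> \<Longrightarrow> \<rho> \<one>\<^bsub>G\<^esub> = 1\<^sub>m n"
  unfolding is_rep_def by auto
lemma rep_mult: "is_rep G n \<rho> \<Longrightarrow> g \<in> carrier G \<Longrightarrow> h \<in> carrier G \<Longrightarrow> \<rho> (g \<otimes>\<^bsub>G\<^esub> h) = \<rho> g * \<rho> h"
  unfolding is_rep_def by auto

lemma rep_pow:
  assumes G: "group G" and r: "is_rep G n \<rho>" and g: "g \<in> carrier G"
  shows "\<rho> (g [^]\<^bsub>G\<^esub> (k::nat)) = \<rho> g ^\<^sub>m k"
proof (induction k)
  case 0 thus ?case using rep_one[OF r] rep_carrier[OF r g] by simp
next
  case (Suc k)
  have "g [^]\<^bsub>G\<^esub> k \<in> carrier G" using G g by (simp add: group.is_monoid monoid.nat_pow_closed)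
  thus ?case using Suc rep_mult[OF r _ g] by simp
qed

lemma rep_order:
  assumes G: "group G" and fin: "finite (carrier G)" and r: "is_rep G n \<rho>" and g: "g \<in> carrier G"
  shows "\<rho> g ^\<^sub>m Coset.order G = 1\<^sub>m n" "Coset.order G > 0"
proof -
  have "\<rho> g ^\<^sub>m Coset.order G = \<rho> (g [^]\<^bsub>G\<^esub> Coset.order G)" using rep_pow[OF G r g] by simp
  also have "\<dots> = 1\<^sub>m n" using group.pow_order_eq_1[OF G g] rep_one[OF r] by simp
  finally show "\<rho> g ^\<^sub>m Coset.order G = 1\<^sub>m n" .
  show "Coset.order G > 0" using fin G by (simp add: group.is_monoid monoid.order_gt_0_iff_finite)
qed

lemma rep_inv_one:
  assumes G: "group G" and r: "is_rep G n \<rho>" and a: "a \<in> carrier G" and a1: "\<rho> a = 1\<^sub>m n"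
  shows "\<rho> (inv\<^bsub>G\<^esub> a) = 1\<^sub>m n"
proof -
  have ia: "inv\<^bsub>G\<^esub> a \<in> carrier G" using G a by simp
  have "\<rho> (inv\<^bsub>G\<^esub> a) = \<rho> (inv\<^bsub>G\<^esub> a) * \<rho> a" using a1 rep_carrier[OF r ia] by simp
  also have "\<dots> = \<rho> (inv\<^bsub>G\<^esub> a \<otimes>\<^bsub>G\<^esub> a)" using rep_mult[OF r ia a] by simp
  also have "\<dots> = 1\<^sub>m n" using G a rep_one[OF r] by (simp add: group.l_inv)
  finally show ?thesis .
qed

definition rep_ker :: "('a, 'b) monoid_scheme \<Rightarrow> nat \<Rightarrow> ('a \<Rightarrow> complex mat) \<Rightarrow> 'a set" where
  "rep_ker G n \<rho> = {y \<in> carrier G. \<rho> y = 1\<^sub>m n}"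

lemma rep_ker_normal:
  fixes G (structure)
  assumes G: "group G" and r: "is_rep G n \<rho>"
  shows "rep_ker G n \<rho> \<lhd> G"
proof -
  interpret group G by (rule G)
  have sub: "subgroup (rep_ker G n \<rho>) G"
  proof (rule subgroupI)
    show "rep_ker G n \<rho> \<subseteq> carrier G" unfolding rep_ker_def by auto
    show "rep_ker G n \<rho> \<noteq> {}" using rep_one[OF r] unfolding rep_ker_def by auto
    fix a assume a: "a \<in> rep_ker G n \<rho>"
    thus "inv a \<in> rep_ker G n \<rho>" using rep_inv_one[OF G r] unfolding rep_ker_def by auto
    fix b assume b: "b \<in> rep_ker G n \<rho>"
    show "a \<otimes> b \<in> rep_ker G n \<rho>" using a b rep_mult[OF r] unfolding rep_ker_def by auto
  qed
  show ?thesis unfolding normal_inv_iff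
  proof (intro conjI sub ballI)
    fix x h assume x: "x \<in> carrier G" and h: "h \<in> rep_ker G n \<rho>"
    have hc: "h \<in> carrier G" and h1: "\<rho> h = 1\<^sub>m n" using h unfolding rep_ker_def by auto
    have "\<rho> (x \<otimes> h \<otimes> inv x) = \<rho> x * \<rho> h * \<rho> (inv x)"
      using rep_mult[OF r] x hc by simp
    also have "\<dots> = \<rho> x * \<rho> (inv x)" using h1 rep_carrier[OF r x] by simp
    also have "\<dots> = 1\<^sub>m n" using rep_mult[OF r x, of "inv x"] x rep_one[OF r] by simp
    finally show "x \<otimes> h \<otimes> inv x \<in> rep_ker G n \<rho>" unfolding rep_ker_def using x hc by simp
  qed
qed

lemma center_normal:
  fixes G (structure)
  assumes G: "group G"
  shows "grp_center G \<lhd> G"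
proof -
  interpret group G by (rule G)
  have sub: "subgroup (grp_center G) G"
  proof (rule subgroupI)
    show "grp_center G \<subseteq> carrier G" unfolding grp_center_def by auto
    show "grp_center G \<noteq> {}" unfolding grp_center_def by (auto intro!: exI[of _ \<one>])
    fix a assume a: "a \<in> grp_center G"
    hence ac: "a \<in> carrier G" and ca: "\<forall>x\<in>carrier G. x \<otimes> a = a \<otimes> x" unfolding grp_center_def by auto
    have "x \<otimes> inv a = inv a \<otimes> x" if x: "x \<in> carrier G" for x
    proof -
      have e: "inv a \<otimes> (x \<otimes> a) \<otimes> inv a = inv a \<otimes> (a \<otimes> x) \<otimes> inv a" using ca x by simp
      have "inv a \<otimes> (x \<otimes> a) \<otimes> inv a = inv a \<otimes> (x \<otimes> (a \<otimes> inv a))" using ac x by (simp add: m_assoc)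
      also have "\<dots> = inv a \<otimes> x" using ac x by simp
      finally have e1: "inv a \<otimes> (x \<otimes> a) \<otimes> inv a = inv a \<otimes> x" .
      have "inv a \<otimes> (a \<otimes> x) \<otimes> inv a = (inv a \<otimes> a) \<otimes> x \<otimes> inv a" using ac x by (simp only: m_assoc inv_closed m_closed)
      also have "\<dots> = x \<otimes> inv a" using ac x by simp
      finally show ?thesis using e e1 by simp
    qed
    thus "inv a \<in> grp_center G" unfolding grp_center_def using ac by auto
    fix b assume b: "b \<in> grp_center G"
    hence bc: "b \<in> carrier G" and cb: "\<forall>x\<in>carrier G. x \<otimes> b = b \<otimes> x" unfolding grp_center_def by auto
    have "x \<otimes> (a \<otimes> b) = (a \<otimes> b) \<otimes> x" if x: "x \<in> carrier G" for x
    proof -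
      have "x \<otimes> (a \<otimes> b) = (x \<otimes> a) \<otimes> b" using x ac bc by (simp add: m_assoc)
      also have "\<dots> = a \<otimes> (x \<otimes> b)" using ca x ac bc by (simp add: m_assoc)
      also have "\<dots> = a \<otimes> (b \<otimes> x)" using cb x by simp
      also have "\<dots> = (a \<otimes> b) \<otimes> x" using x ac bc by (simp add: m_assoc)
      finally show ?thesis .
    qed
    thus "a \<otimes> b \<in> grp_center G" unfolding grp_center_def using ac bc by auto
  qed
  show ?thesis unfolding normal_inv_iff
  proof (intro conjI sub ballI)
    fix x h assume x: "x \<in> carrier G" and h: "h \<in> grp_center G"
    hence hc: "h \<in> carrier G" and ch: "\<forall>x\<in>carrier G. x \<otimes> h = h \<otimes> x" unfolding grp_center_def by auto
    have "x \<otimes> h \<otimes> inv x = h \<otimes> x \<otimes> inv x" using ch x by simp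
    also have "\<dots> = h" using x hc by (simp add: m_assoc)
    finally show "x \<otimes> h \<otimes> inv x \<in> grp_center G" using h by simp
  qed
qed

lemma schur_central:
  assumes G: "group G" and irr: "irr_rep G n \<rho>" and z: "z \<in> carrier G"
    and zc: "\<forall>x\<in>carrier G. x \<otimes>\<^bsub>G\<^esub> z = z \<otimes>\<^bsub>G\<^esub> x"
  shows "\<exists>\<mu>. \<rho> z = \<mu> \<cdot>\<^sub>m 1\<^sub>m n"
proof -
  have r: "is_rep G n \<rho>" and n0: "n > 0"
    and ir: "\<forall>W. invariant_subspace G n \<rho> W \<longrightarrow> W = {0\<^sub>v n} \<or> W = carrier_vec n"
    using irr unfolding irr_rep_def by auto
  have Z: "\<rho> z \<in> carrier_mat n n" using rep_carrier[OF r z] .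
  obtain \<mu> where "\<mu> \<in> spectrum (\<rho> z)" using spectrum_non_empty[OF Z n0] by auto
  then obtain v where v: "v \<in> carrier_vec n" "v \<noteq> 0\<^sub>v n" "\<rho> z *\<^sub>v v = \<mu> \<cdot>\<^sub>v v"
    unfolding spectrum_def eigenvalue_def eigenvector_def using Z by auto
  define W where "W = {w \<in> carrier_vec n. \<rho> z *\<^sub>v w = \<mu> \<cdot>\<^sub>v w}"
  have inv: "invariant_subspace G n \<rho> W"
    unfolding invariant_subspace_def
  proof (intro conjI ballI allI)
    show "W \<subseteq> carrier_vec n" unfolding W_def by auto
    show "0\<^sub>v n \<in> W" unfolding W_def using Z by auto
    fix x assume x: "x \<in> W"
    hence xc: "x \<in> carrier_vec n" and ex: "\<rho> z *\<^sub>v x = \<mu> \<cdot>\<^sub>v x" unfolding W_def by auto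
    {
      fix y assume "y \<in> W"
      hence yc: "y \<in> carrier_vec n" and ey: "\<rho> z *\<^sub>v y = \<mu> \<cdot>\<^sub>v y" unfolding W_def by auto
      have "\<rho> z *\<^sub>v (x + y) = \<rho> z *\<^sub>v x + \<rho> z *\<^sub>v y" using mult_add_distrib_mat_vec[OF Z xc yc] .
      also have "\<dots> = \<mu> \<cdot>\<^sub>v (x + y)" using ex ey xc yc by (simp add: smult_add_distrib_vec)
      finally show "x + y \<in> W" unfolding W_def using xc yc by simp
    }
    {
      fix c
      have "\<rho> z *\<^sub>v (c \<cdot>\<^sub>v x) = c \<cdot>\<^sub>v (\<rho> z *\<^sub>v x)" using mult_mat_vec[OF Z xc] .
      also have "\<dots> = \<mu> \<cdot>\<^sub>v (c \<cdot>\<^sub>v x)" unfolding ex by (simp add: smult_smult_assoc mult.commute)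
      finally show "c \<cdot>\<^sub>v x \<in> W" unfolding W_def using xc by simp
    }
    {
      fix g assume g: "g \<in> carrier G"
      have gc: "\<rho> g \<in> carrier_mat n n" using rep_carrier[OF r g] .
      have "\<rho> z * \<rho> g = \<rho> g * \<rho> z" using rep_mult[OF r z g] rep_mult[OF r g z] zc g by simp
      hence "\<rho> z *\<^sub>v (\<rho> g *\<^sub>v x) = \<rho> g *\<^sub>v (\<rho> z *\<^sub>v x)"
        using assoc_mult_mat_vec[OF Z gc xc] assoc_mult_mat_vec[OF gc Z xc] by simp
      also have "\<dots> = \<mu> \<cdot>\<^sub>v (\<rho> g *\<^sub>v x)" unfolding ex using mult_mat_vec[OF gc xc] .
      finally show "\<rho> g *\<^sub>v x \<in> W" unfolding W_def using gc xc by simp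
    }
  qed
  have "v \<in> W" unfolding W_def using v by simp
  hence WC: "W = carrier_vec n" using ir inv v(2) by auto
  have "\<rho> z = \<mu> \<cdot>\<^sub>m 1\<^sub>m n"
  proof (rule eq_matI)
    fix i j assume "i < dim_row (\<mu> \<cdot>\<^sub>m 1\<^sub>m n :: complex mat)" "j < dim_col (\<mu> \<cdot>\<^sub>m 1\<^sub>m n :: complex mat)"
    hence ij: "i < n" "j < n" by auto
    have "unit_vec n j \<in> W" unfolding WC using ij by simp
    hence "\<rho> z *\<^sub>v unit_vec n j = \<mu> \<cdot>\<^sub>v unit_vec n j" unfolding W_def by simp
    hence "(\<rho> z *\<^sub>v unit_vec n j) $ i = (\<mu> \<cdot>\<^sub>v unit_vec n j) $ i" by simp
    moreover have "(\<rho> z *\<^sub>v unit_vec n j) $ i = \<rho> z $$ (i,j)"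
    proof -
      have "(\<rho> z *\<^sub>v unit_vec n j) $ i = (\<Sum>ia = 0..<n. \<rho> z $$ (i, ia) * (if ia = j then 1 else 0))"
        using Z ij by (simp add: mult_mat_vec_def scalar_prod_def unit_vec_def)
      also have "\<dots> = (\<Sum>ia = 0..<n. if ia = j then \<rho> z $$ (i, ia) else 0)"
        by (rule sum.cong) auto
      also have "\<dots> = \<rho> z $$ (i,j)" using ij by (simp add: sum.delta')
      finally show ?thesis .
    qed
    ultimately show "\<rho> z $$ (i,j) = (\<mu> \<cdot>\<^sub>m 1\<^sub>m n) $$ (i,j)" using ij by simp
  qed (use Z in auto)
  thus ?thesis by blast
qed

lemma trace_one: "mat_trace (1\<^sub>m n) = of_nat n"
  unfolding mat_trace_def by simp

lemma charX_kernel: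
  fixes G (structure)
  assumes G: "group G" and fin: "finite (carrier G)" and Z2: "second_center G = grp_center G"
    and chi: "irr_char G \<chi>" and X: "grp_center G \<subset> char_center G \<chi>"
  shows "\<exists>N. N \<lhd> G \<and> \<not> N \<subseteq> grp_center G \<and> N \<subseteq> char_ker G \<chi>"
proof -
  interpret group G by (rule G)
  obtain n \<rho> where irr: "irr_rep G n \<rho>" and chi_eq: "\<forall>g\<in>carrier G. \<chi> g = mat_trace (\<rho> g)"
    using chi unfolding irr_char_def by auto
  have r: "is_rep G n \<rho>" using irr unfolding irr_rep_def by auto
  define Z where "Z = grp_center G"
  have ZN: "Z \<lhd> G" unfolding Z_def by (rule center_normal[OF G])
  interpret N: normal Z G by (rule ZN)
  have ZC: "Z \<subseteq> carrier G" unfolding Z_def grp_center_def by auto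
  have chi1: "\<chi> \<one> = of_nat n" using chi_eq rep_one[OF r] trace_one by simp
  obtain g where gcc: "g \<in> char_center G \<chi>" and gZ: "g \<notin> Z" using X unfolding Z_def by auto
  have gc: "g \<in> carrier G" and gm: "complex_of_real (cmod (\<chi> g)) = \<chi> \<one>"
    using gcc unfolding char_center_def by auto
  have "cmod (mat_trace (\<rho> g)) = real n" using gm chi1 chi_eq gc
    by (metis of_real_eq_iff of_real_of_nat_eq)
  then obtain c where rg: "\<rho> g = c \<cdot>\<^sub>m 1\<^sub>m n"
    using L1[OF rep_carrier[OF r gc] rep_order(1)[OF G fin r gc] rep_order(2)[OF G fin r gc]] by auto
  have "g \<notin> second_center G" using gZ Z2 unfolding Z_def by simp
  hence "Z #> g \<notin> grp_center (G Mod Z)" using gc unfolding second_center_def Z_def by simp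
  moreover have gcar: "Z #> g \<in> carrier (G Mod Z)" using gc unfolding carrier_FactGroup by simp
  ultimately obtain XX where XX: "XX \<in> carrier (G Mod Z)"
    and ne: "XX \<otimes>\<^bsub>G Mod Z\<^esub> (Z #> g) \<noteq> (Z #> g) \<otimes>\<^bsub>G Mod Z\<^esub> XX"
    unfolding grp_center_def by auto
  obtain x where xc: "x \<in> carrier G" and XXx: "XX = Z #> x" using XX unfolding carrier_FactGroup by auto
  have "Z #> (x \<otimes> g) \<noteq> Z #> (g \<otimes> x)"
    using ne unfolding XXx mult_FactGroup using N.rcos_sum xc gc by simp
  define c' where "c' = (x \<otimes> g) \<otimes> inv (g \<otimes> x)"
  have c'c: "c' \<in> carrier G" unfolding c'_def using xc gc by simp
  have c'Z: "c' \<notin> Z"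
  proof
    assume cZ: "c' \<in> Z"
    have "c' \<otimes> (g \<otimes> x) = x \<otimes> g" unfolding c'_def using xc gc by (simp add: m_assoc)
    hence "Z #> (x \<otimes> g) = Z #> (c' \<otimes> (g \<otimes> x))" by simp
    also have "\<dots> = (Z #> c') #> (g \<otimes> x)" using coset_mult_assoc[OF ZC c'c, of "g \<otimes> x"] xc gc by simp
    also have "\<dots> = Z #> (g \<otimes> x)" using N.rcos_const[OF G cZ] by simp
    finally show False using \<open>Z #> (x \<otimes> g) \<noteq> Z #> (g \<otimes> x)\<close> by simp
  qed
  have rx: "\<rho> x \<in> carrier_mat n n" using rep_carrier[OF r xc] .
  have "\<rho> (x \<otimes> g) = c \<cdot>\<^sub>m \<rho> x"
    using rep_mult[OF r xc gc] rg mult_smult_distrib[OF rx one_carrier_mat] rx by simp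
  moreover have "\<rho> (g \<otimes> x) = c \<cdot>\<^sub>m \<rho> x"
    using rep_mult[OF r gc xc] rg smult_one_mult[OF rx] by simp
  ultimately have eqx: "\<rho> (x \<otimes> g) = \<rho> (g \<otimes> x)" by simp
  have gx: "g \<otimes> x \<in> carrier G" using gc xc by simp
  have "\<rho> c' = \<rho> (x \<otimes> g) * \<rho> (inv (g \<otimes> x))" unfolding c'_def using rep_mult[OF r] xc gc by simp
  also have "\<dots> = \<rho> ((g \<otimes> x) \<otimes> inv (g \<otimes> x))" unfolding eqx using rep_mult[OF r gx, of "inv (g \<otimes> x)"] gx by simp
  also have "\<dots> = 1\<^sub>m n" using gx rep_one[OF r] by simp
  finally have rc': "\<rho> c' = 1\<^sub>m n" .
  have "rep_ker G n \<rho> \<lhd> G" by (rule rep_ker_normal[OF G r])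
  moreover have "\<not> rep_ker G n \<rho> \<subseteq> grp_center G" using rc' c'c c'Z unfolding rep_ker_def Z_def by auto
  moreover have "rep_ker G n \<rho> \<subseteq> char_ker G \<chi>"
    unfolding rep_ker_def char_ker_def using chi_eq chi1 trace_one by auto
  ultimately show ?thesis by blast
qed

lemma perm_rep:
  fixes G (structure)
  assumes G: "group G" and fin: "finite (carrier G)" and NG: "N \<lhd> G"
    and gc: "g \<in> carrier G" and gN: "g \<notin> N"
  shows "\<exists>r \<rho>. is_rep G r \<rho> \<and> 0 < r \<and> (\<forall>y\<in>N. \<rho> y = 1\<^sub>m r) \<and> \<rho> g \<noteq> 1\<^sub>m r"
proof -
  interpret group G by (rule G)
  interpret NN: normal N G by (rule NG)
  have NC: "N \<subseteq> carrier G" by (rule NN.subset)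
  define R where "R = rcosets N"
  have RP: "R \<subseteq> Pow (carrier G)" unfolding R_def by (rule rcosets_subset_PowG[OF NN.subgroup_axioms])
  have fR: "finite R" using finite_subset[OF RP] fin by simp
  obtain cs where cs: "set cs = R" "distinct cs" using finite_distinct_list[OF fR] by blast
  define r where "r = length cs"
  have Rform: "\<exists>a\<in>carrier G. C = a <# N" if CR: "C \<in> R" for C
  proof -
    obtain a where a: "a \<in> carrier G" "C = N #> a" using CR unfolding R_def RCOSETS_def by auto
    thus ?thesis using NN.coset_eq by auto
  qed
  have RC: "C \<subseteq> carrier G" if "C \<in> R" for C using RP that by auto
  have act: "x <# C \<in> R" if C: "C \<in> R" and x: "x \<in> carrier G" for x C
  proof -
    obtain a where a: "a \<in> carrier G" "C = a <# N" using Rform[OF C] by auto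
    have "x <# C = (x \<otimes> a) <# N" unfolding a(2) using lcos_m_assoc[OF NC x a(1)] .
    also have "\<dots> = N #> (x \<otimes> a)" using NN.coset_eq x a by simp
    finally show ?thesis unfolding R_def using rcosetsI[OF NC] x a by simp
  qed
  have idx: "\<exists>l<r. cs ! l = D" if "D \<in> R" for D
    using that cs(1) unfolding r_def by (metis in_set_conv_nth)
  have inj: "(cs ! l = cs ! l') = (l = l')" if "l < r" "l' < r" for l l'
    using nth_eq_iff_index_eq[OF cs(2)] that unfolding r_def by simp
  have csR: "cs ! l \<in> R" if "l < r" for l using that cs(1) unfolding r_def by auto
  define \<rho> where "\<rho> = (\<lambda>x. mat r r (\<lambda>(i,j). if cs ! i = x <# (cs ! j) then 1 else (0::complex)))"
  have rc: "\<rho> x \<in> carrier_mat r r" for x unfolding \<rho>_def by simp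
  have r1: "\<rho> \<one> = 1\<^sub>m r"
    unfolding \<rho>_def by (rule eq_matI) (auto simp: lcos_mult_one[OF RC[OF csR]] inj)
  have rm: "\<rho> (x \<otimes> y) = \<rho> x * \<rho> y" if x: "x \<in> carrier G" and y: "y \<in> carrier G" for x y
  proof (rule eq_matI)
    fix i j assume "i < dim_row (\<rho> x * \<rho> y)" "j < dim_col (\<rho> x * \<rho> y)"
    hence ij: "i < r" "j < r" using carrier_matD[OF rc[of x]] carrier_matD[OF rc[of y]] by auto
    define D where "D = y <# (cs ! j)"
    have DR: "D \<in> R" unfolding D_def using act[OF csR[OF ij(2)] y] .
    obtain l0 where l0: "l0 < r" "cs ! l0 = D" using idx[OF DR] by auto
    have "(\<rho> x * \<rho> y) $$ (i,j) = (\<Sum>l<r. \<rho> x $$ (i,l) * \<rho> y $$ (l,j))"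
      using mult_entry[OF rc rc ij] .
    also have "\<dots> = (\<Sum>l<r. if l = l0 then (if cs ! i = x <# (cs ! l) then 1 else 0) else 0)"
    proof (rule sum.cong)
      fix l assume "l \<in> {..<r}"
      hence l: "l < r" by simp
      have "(cs ! l = y <# (cs ! j)) = (l = l0)" using inj[OF l l0(1)] l0(2) unfolding D_def by simp
      thus "\<rho> x $$ (i,l) * \<rho> y $$ (l,j) = (if l = l0 then (if cs ! i = x <# (cs ! l) then 1 else 0) else 0)"
        unfolding \<rho>_def using ij l by auto
    qed simp
    also have "\<dots> = (if cs ! i = x <# D then 1 else 0)" using l0 by (simp add: sum.delta)
    also have "x <# D = (x \<otimes> y) <# (cs ! j)" unfolding D_def
      using lcos_m_assoc[OF RC[OF csR[OF ij(2)]] x y] .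
    finally show "\<rho> (x \<otimes> y) $$ (i,j) = (\<rho> x * \<rho> y) $$ (i,j)" unfolding \<rho>_def using ij by simp
  qed (unfold \<rho>_def, auto)
  have rep: "is_rep G r \<rho>" unfolding is_rep_def using rc r1 rm by auto
  have Nfix: "y <# C = C" if y: "y \<in> N" and C: "C \<in> R" for y C
  proof -
    obtain a where a: "a \<in> carrier G" "C = a <# N" using Rform[OF C] by auto
    have yc: "y \<in> carrier G" using y NC by auto
    have "y <# C = (y \<otimes> a) <# N" unfolding a(2) using lcos_m_assoc[OF NC yc a(1)] .
    also have "\<dots> = N #> (y \<otimes> a)" using NN.coset_eq yc a by simp
    also have "\<dots> = (N #> y) #> a" using coset_mult_assoc[OF NC yc a(1)] by simp
    also have "\<dots> = N #> a" using NN.rcos_const[OF G y] by simp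
    finally show ?thesis using NN.coset_eq a by simp
  qed
  have kerN: "\<forall>y\<in>N. \<rho> y = 1\<^sub>m r"
  proof
    fix y assume y: "y \<in> N"
    show "\<rho> y = 1\<^sub>m r" unfolding \<rho>_def by (rule eq_matI) (auto simp: Nfix[OF y csR] inj)
  qed
  have NR: "N \<in> R" unfolding R_def using rcosetsI[OF NC one_closed] coset_mult_one[OF NC] by simp
  obtain l0 where l0: "l0 < r" "cs ! l0 = N" using idx[OF NR] by auto
  have r0: "0 < r" using l0 by simp
  have "g \<in> g <# N" unfolding l_coset_def using NN.one_closed gc by force
  hence "g <# N \<noteq> N" using gN by auto
  hence "\<rho> g $$ (l0,l0) = 0" unfolding \<rho>_def using l0 by simp
  hence "\<rho> g \<noteq> 1\<^sub>m r" using l0 by auto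
  thus ?thesis using rep r0 kerN by blast
qed

lemma conj_mult:
  fixes A B P P' :: "'a::comm_ring_1 mat"
  assumes A: "A \<in> carrier_mat n n" and B: "B \<in> carrier_mat n n"
    and P: "P \<in> carrier_mat n n" and P': "P' \<in> carrier_mat n n" and PP': "P * P' = 1\<^sub>m n"
  shows "(P' * A * P) * (P' * B * P) = P' * (A * B) * P"
proof -
  have "(P' * A * P) * (P' * B * P) = P' * A * (P * (P' * (B * P)))"
    using A B P P' by (simp add: assoc_mult_mat[of _ n n _ n _ n])
  also have "P * (P' * (B * P)) = (P * P') * (B * P)" using B P P' by (simp add: assoc_mult_mat[of _ n n _ n _ n])
  also have "\<dots> = B * P" using PP' B P by simp
  finally show ?thesis using A B P P' by (simp add: assoc_mult_mat[of _ n n _ n _ n])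
qed

lemma conj_back:
  fixes A P P' :: "'a::comm_ring_1 mat"
  assumes A: "A \<in> carrier_mat n n"
    and P: "P \<in> carrier_mat n n" and P': "P' \<in> carrier_mat n n" and PP': "P * P' = 1\<^sub>m n"
  shows "P * (P' * A * P) * P' = A"
proof -
  have "P * (P' * A * P) * P' = (P * P') * A * (P * P')"
    using A P P' by (simp add: assoc_mult_mat[of _ n n _ n _ n])
  thus ?thesis using PP' A by simp
qed

lemma exists_irr:
  fixes G (structure)
  assumes G: "group G" and fin: "finite (carrier G)" and gc: "g \<in> carrier G"
    and ex: "\<exists>r \<rho>. is_rep G r \<rho> \<and> 0 < r \<and> (\<forall>y\<in>N. \<rho> y = 1\<^sub>m r) \<and> \<rho> g \<noteq> 1\<^sub>m r"
  shows "\<exists>d \<sigma>. irr_rep G d \<sigma> \<and> (\<forall>y\<in>N. \<sigma> y = 1\<^sub>m d) \<and> \<sigma> g \<noteq> 1\<^sub>m d"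
proof -
  interpret group G by (rule G)
  define Pr where "Pr d \<sigma> \<longleftrightarrow> is_rep G d \<sigma> \<and> 0 < d \<and> (\<forall>y\<in>N. \<sigma> y = 1\<^sub>m d) \<and> \<sigma> g \<noteq> 1\<^sub>m d" for d \<sigma>
  define d0 where "d0 = (LEAST d. \<exists>\<sigma>. Pr d \<sigma>)"
  have ex': "\<exists>d \<sigma>. Pr d \<sigma>" using ex unfolding Pr_def by blast
  have "\<exists>\<sigma>. Pr d0 \<sigma>" unfolding d0_def using LeastI_ex[of "\<lambda>d. \<exists>\<sigma>. Pr d \<sigma>"] ex' by blast
  then obtain \<sigma> where P\<sigma>: "Pr d0 \<sigma>" by blast
  have min: "d0 \<le> d" if "Pr d \<sigma>'" for d \<sigma>' unfolding d0_def using that by (auto intro: Least_le)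
  have r: "is_rep G d0 \<sigma>" and d0: "0 < d0" and ker: "\<forall>y\<in>N. \<sigma> y = 1\<^sub>m d0" and gne: "\<sigma> g \<noteq> 1\<^sub>m d0"
    using P\<sigma> unfolding Pr_def by auto
  have irr: "\<forall>W. invariant_subspace G d0 \<sigma> W \<longrightarrow> W = {0\<^sub>v d0} \<or> W = carrier_vec d0"
  proof (intro allI impI, rule ccontr)
    fix W assume inv: "invariant_subspace G d0 \<sigma> W" and ne: "\<not> (W = {0\<^sub>v d0} \<or> W = carrier_vec d0)"
    have WC: "W \<subseteq> carrier_vec d0" and W0: "0\<^sub>v d0 \<in> W" and Wadd: "\<forall>v\<in>W. \<forall>w\<in>W. v + w \<in> W"
      and Wsm: "\<forall>c. \<forall>v\<in>W. c \<cdot>\<^sub>v v \<in> W" and Winv: "\<forall>x\<in>carrier G. \<forall>v\<in>W. \<sigma> x *\<^sub>v v \<in> W"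
      using inv unfolding invariant_subspace_def by auto
    obtain k P P' where k0: "0 < k" and kn: "k < d0" and P: "P \<in> carrier_mat d0 d0"
      and P': "P' \<in> carrier_mat d0 d0"
      and PP': "P * P' = 1\<^sub>m d0" and P'P: "P' * P = 1\<^sub>m d0" and colS: "\<forall>j<k. col P j \<in> W"
      and zero: "\<forall>v\<in>W. \<forall>i. k \<le> i \<and> i < d0 \<longrightarrow> (P' *\<^sub>v v) $ i = 0"
      using vec_space.KL[OF WC W0 Wadd Wsm] ne by blast
    define Q where "Q x = P' * \<sigma> x * P" for x
    have Qc: "Q x \<in> carrier_mat d0 d0" if "x \<in> carrier G" for x
      unfolding Q_def using rep_carrier[OF r that] P P' by simp
    have Qz: "llz d0 k (Q x)" if x: "x \<in> carrier G" for x
      unfolding Q_def by (rule conj_llz[OF rep_carrier[OF r x] P P' colS WC zero]) (use Winv x kn in auto)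
    have Q1: "Q \<one> = 1\<^sub>m d0" unfolding Q_def using rep_one[OF r] P P' P'P by simp
    have Qm: "Q (x \<otimes> y) = Q x * Q y" if x: "x \<in> carrier G" and y: "y \<in> carrier G" for x y
      unfolding Q_def using conj_mult[OF rep_carrier[OF r x] rep_carrier[OF r y] P P' PP'] rep_mult[OF r x y] by simp
    have Qrep: "is_rep G d0 Q" unfolding is_rep_def using Qc Q1 Qm by auto
    have QN: "Q y = 1\<^sub>m d0" if "y \<in> N" for y unfolding Q_def using ker that P P' P'P by simp
    define \<sigma>1 where "\<sigma>1 x = ulb k (Q x)" for x
    define \<sigma>2 where "\<sigma>2 x = lrb d0 k (Q x)" for x
    have kn': "k \<le> d0" using kn by simp
    have rep1: "is_rep G k \<sigma>1" unfolding is_rep_def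
    proof (intro conjI ballI)
      show "\<sigma>1 x \<in> carrier_mat k k" for x unfolding \<sigma>1_def by simp
      show "\<sigma>1 \<one> = 1\<^sub>m k" unfolding \<sigma>1_def Q1 by (rule ulb_one[OF kn'])
      fix x y assume x: "x \<in> carrier G" and y: "y \<in> carrier G"
      show "\<sigma>1 (x \<otimes> y) = \<sigma>1 x * \<sigma>1 y" unfolding \<sigma>1_def Qm[OF x y]
        by (rule ulb_mult[OF Qc[OF x] Qc[OF y] kn' Qz[OF x] Qz[OF y]])
    qed
    have rep2: "is_rep G (d0 - k) \<sigma>2" unfolding is_rep_def
    proof (intro conjI ballI)
      show "\<sigma>2 x \<in> carrier_mat (d0 - k) (d0 - k)" for x unfolding \<sigma>2_def by simp
      show "\<sigma>2 \<one> = 1\<^sub>m (d0 - k)" unfolding \<sigma>2_def Q1 by (rule lrb_one)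
      fix x y assume x: "x \<in> carrier G" and y: "y \<in> carrier G"
      show "\<sigma>2 (x \<otimes> y) = \<sigma>2 x * \<sigma>2 y" unfolding \<sigma>2_def Qm[OF x y]
        by (rule lrb_mult[OF Qc[OF x] Qc[OF y] kn' Qz[OF x] Qz[OF y]])
    qed
    have ker1: "\<forall>y\<in>N. \<sigma>1 y = 1\<^sub>m k" unfolding \<sigma>1_def using QN ulb_one[of k d0] kn by auto
    have ker2: "\<forall>y\<in>N. \<sigma>2 y = 1\<^sub>m (d0 - k)" unfolding \<sigma>2_def using QN lrb_one[of d0 k] by auto
    have "\<sigma>1 g \<noteq> 1\<^sub>m k \<or> \<sigma>2 g \<noteq> 1\<^sub>m (d0 - k)"
    proof (rule ccontr)
      assume "\<not> ?thesis"
      hence u: "ulb k (Q g) = 1\<^sub>m k" and l: "lrb d0 k (Q g) = 1\<^sub>m (d0 - k)" unfolding \<sigma>1_def \<sigma>2_def by auto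
      have "Q g = 1\<^sub>m d0"
        using unip[OF Qc[OF gc] _ Qz[OF gc] u l rep_order(1)[OF G fin Qrep gc] rep_order(2)[OF G fin Qrep gc]] kn by simp
      hence "\<sigma> g = P * 1\<^sub>m d0 * P'" using conj_back[OF rep_carrier[OF r gc] P P' PP'] unfolding Q_def by simp
      hence "\<sigma> g = 1\<^sub>m d0" using P PP' by simp
      thus False using gne by simp
    qed
    hence "Pr k \<sigma>1 \<or> Pr (d0 - k) \<sigma>2" unfolding Pr_def using rep1 rep2 ker1 ker2 k0 kn by auto
    thus False
    proof
      assume "Pr k \<sigma>1" thus False using min[of k \<sigma>1] kn by simp
    next
      assume "Pr (d0 - k) \<sigma>2" thus False using min[of "d0 - k" \<sigma>2] k0 kn by simp
    qed
  qed
  have "irr_rep G d0 \<sigma>" unfolding irr_rep_def using r d0 irr by auto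
  thus ?thesis using ker gne by blast
qed

lemma trace_smult_one: "mat_trace (c \<cdot>\<^sub>m 1\<^sub>m n) = of_nat n * c"
  unfolding mat_trace_def by simp

lemma noncentral_char:
  fixes G (structure)
  assumes G: "group G" and fin: "finite (carrier G)" and NG: "N \<lhd> G"
    and NZ: "\<not> N \<subseteq> grp_center G" and gc: "g \<in> carrier G" and gN: "g \<notin> N"
  shows "\<exists>\<chi>. irr_char G \<chi> \<and> grp_center G \<subset> char_center G \<chi> \<and> g \<notin> char_ker G \<chi>"
proof -
  interpret group G by (rule G)
  obtain d \<sigma> where irr: "irr_rep G d \<sigma>" and ker: "\<forall>y\<in>N. \<sigma> y = 1\<^sub>m d" and gne: "\<sigma> g \<noteq> 1\<^sub>m d"
    using exists_irr[OF G fin gc perm_rep[OF G fin NG gc gN]] by blast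
  have r: "is_rep G d \<sigma>" and d0: "d > 0" using irr unfolding irr_rep_def by auto
  define \<chi> where "\<chi> x = mat_trace (\<sigma> x)" for x
  have chi: "irr_char G \<chi>" unfolding irr_char_def \<chi>_def using irr by blast
  have chi1: "\<chi> \<one> = of_nat d" unfolding \<chi>_def using rep_one[OF r] trace_one by simp
  have gk: "g \<notin> char_ker G \<chi>"
  proof
    assume "g \<in> char_ker G \<chi>"
    hence tg: "mat_trace (\<sigma> g) = of_nat d" unfolding char_ker_def using chi1 \<chi>_def by simp
    hence "cmod (mat_trace (\<sigma> g)) = real d" by simp
    then obtain c where sc: "\<sigma> g = c \<cdot>\<^sub>m 1\<^sub>m d"
      using L1[OF rep_carrier[OF r gc] rep_order(1)[OF G fin r gc] rep_order(2)[OF G fin r gc]] by auto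
    have "of_nat d * c = of_nat d" using tg unfolding sc trace_smult_one .
    hence "c = 1" using d0 by simp
    hence "\<sigma> g = 1\<^sub>m d" unfolding sc by (intro eq_matI) auto
    thus False using gne by simp
  qed
  have Zsub: "grp_center G \<subseteq> char_center G \<chi>"
  proof
    fix z assume "z \<in> grp_center G"
    hence zc: "z \<in> carrier G" and comm: "\<forall>x\<in>carrier G. x \<otimes> z = z \<otimes> x" unfolding grp_center_def by auto
    obtain \<mu> where sz: "\<sigma> z = \<mu> \<cdot>\<^sub>m 1\<^sub>m d" using schur_central[OF G irr zc comm] by auto
    have "(\<mu> \<cdot>\<^sub>m 1\<^sub>m d) ^\<^sub>m Coset.order G = \<mu> ^ Coset.order G \<cdot>\<^sub>m 1\<^sub>m d" using smult_pow[of "1\<^sub>m d" d \<mu>] by simp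
    hence "\<mu> ^ Coset.order G \<cdot>\<^sub>m 1\<^sub>m d = (1\<^sub>m d :: complex mat)" using rep_order(1)[OF G fin r zc] sz by simp
    hence "(\<mu> ^ Coset.order G \<cdot>\<^sub>m 1\<^sub>m d) $$ (0,0) = (1\<^sub>m d :: complex mat) $$ (0,0)" by simp
    hence "\<mu> ^ Coset.order G = 1" using d0 by simp
    hence m1: "cmod \<mu> = 1" using root_unity_norm rep_order(2)[OF G fin r zc] by blast
    have "\<chi> z = of_nat d * \<mu>" unfolding \<chi>_def sz trace_smult_one ..
    hence "cmod (\<chi> z) = real d" using m1 by (simp add: norm_mult)
    thus "z \<in> char_center G \<chi>" unfolding char_center_def using zc chi1 by simp
  qed
  have NC: "N \<subseteq> carrier G" using NG normal_imp_subgroup subgroup.subset by blast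
  have Nsub: "N \<subseteq> char_center G \<chi>"
  proof
    fix y assume y: "y \<in> N"
    have "\<chi> y = of_nat d" unfolding \<chi>_def using ker y trace_one by simp
    thus "y \<in> char_center G \<chi>" unfolding char_center_def using y NC chi1 by auto
  qed
  have "grp_center G \<subset> char_center G \<chi>" using Zsub Nsub NZ by auto
  thus ?thesis using chi gk by blast
qed

theorem theoremB:
  fixes G :: "('a, 'b) monoid_scheme"
  assumes "group G" and "finite (carrier G)"
    and "grp_center G \<noteq> carrier G"
    and "second_center G = grp_center G"
  shows "K_grp G = carrier G \<inter> \<Inter> {N. N \<lhd> G \<and> \<not> N \<subseteq> grp_center G} \<and>
         ((\<not> K_grp G \<subseteq> grp_center G) \<longleftrightarrow>
           (\<exists>!N. N \<lhd> G \<and> \<not> N \<subseteq> grp_center G \<and>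
                 (\<forall>M. M \<lhd> G \<and> \<not> M \<subseteq> grp_center G \<and> M \<subseteq> N \<longrightarrow> M = N)))"
proof -
  note G = assms(1) and fin = assms(2) and Zne = assms(3) and Z2 = assms(4)
  define Z where "Z = grp_center G"
  define NC where "NC = {N. N \<lhd> G \<and> \<not> N \<subseteq> Z}"
  have KG: "K_grp G = carrier G \<inter> \<Inter> {char_ker G \<chi> | \<chi>. irr_char G \<chi> \<and> Z \<subset> char_center G \<chi>}"
    unfolding K_grp_def Z_def using Zne by simp
  have part1: "K_grp G = carrier G \<inter> \<Inter> NC"
  proof (rule equalityI)
    show "K_grp G \<subseteq> carrier G \<inter> \<Inter> NC"
    proof
      fix x assume xK: "x \<in> K_grp G"
      hence xc: "x \<in> carrier G" unfolding KG by auto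
      have "x \<in> N" if N: "N \<in> NC" for N
      proof (rule ccontr)
        assume xN: "x \<notin> N"
        obtain \<chi> where "irr_char G \<chi>" "Z \<subset> char_center G \<chi>" "x \<notin> char_ker G \<chi>"
          using noncentral_char[OF G fin _ _ xc xN] N unfolding NC_def Z_def by auto
        thus False using xK unfolding KG by blast
      qed
      thus "x \<in> carrier G \<inter> \<Inter> NC" using xc by auto
    qed
    show "carrier G \<inter> \<Inter> NC \<subseteq> K_grp G"
    proof
      fix x assume x: "x \<in> carrier G \<inter> \<Inter> NC"
      have "x \<in> char_ker G \<chi>" if chi: "irr_char G \<chi>" and X: "Z \<subset> char_center G \<chi>" for \<chi>
      proof -
        obtain N where "N \<lhd> G" "\<not> N \<subseteq> Z" "N \<subseteq> char_ker G \<chi>"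
          using charX_kernel[OF G fin Z2 chi] X unfolding Z_def by blast
        thus ?thesis using x unfolding NC_def by auto
      qed
      thus "x \<in> K_grp G" unfolding KG using x by blast
    qed
  qed
  have ZC: "Z \<subseteq> carrier G" unfolding Z_def grp_center_def by auto
  have CNC: "carrier G \<in> NC"
  proof -
    have "\<not> carrier G \<subseteq> Z" using Zne ZC unfolding Z_def by auto
    thus ?thesis unfolding NC_def using group.normal_self[OF G] by simp
  qed
  have Kint: "K_grp G = \<Inter> NC" unfolding part1 using CNC by auto
  have KN: "K_grp G \<lhd> G"
  proof -
    have sub: "subgroup (\<Inter> NC) G"
      by (rule group.subgroups_Inter[OF G]) (use CNC normal_imp_subgroup in \<open>auto simp: NC_def\<close>)
    show ?thesis unfolding Kint group.normal_inv_iff[OF G]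
    proof (intro conjI sub ballI)
      fix x h assume x: "x \<in> carrier G" and h: "h \<in> \<Inter> NC"
      show "x \<otimes>\<^bsub>G\<^esub> h \<otimes>\<^bsub>G\<^esub> inv\<^bsub>G\<^esub> x \<in> \<Inter> NC"
      proof
        fix N assume N: "N \<in> NC"
        hence "N \<lhd> G" unfolding NC_def by auto
        hence "\<forall>x\<in>carrier G. \<forall>h\<in>N. x \<otimes>\<^bsub>G\<^esub> h \<otimes>\<^bsub>G\<^esub> inv\<^bsub>G\<^esub> x \<in> N"
          using group.normal_inv_iff[OF G] by simp
        moreover have "h \<in> N" using h N by auto
        ultimately show "x \<otimes>\<^bsub>G\<^esub> h \<otimes>\<^bsub>G\<^esub> inv\<^bsub>G\<^esub> x \<in> N" using x by simp
      qed
    qed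
  qed
  have finsub: "finite M" if MN: "M \<in> NC" for M
  proof -
    have "subgroup M G" using MN normal_imp_subgroup unfolding NC_def by auto
    hence "M \<subseteq> carrier G" by (rule subgroup.subset)
    thus ?thesis using fin finite_subset by auto
  qed
  define Pm where "Pm N \<longleftrightarrow> N \<lhd> G \<and> \<not> N \<subseteq> Z \<and> (\<forall>M. M \<lhd> G \<and> \<not> M \<subseteq> Z \<and> M \<subseteq> N \<longrightarrow> M = N)" for N
  have part2: "(\<not> K_grp G \<subseteq> Z) \<longleftrightarrow> (\<exists>!N. Pm N)"
  proof
    assume KZ: "\<not> K_grp G \<subseteq> Z"
    hence KNC: "K_grp G \<in> NC" unfolding NC_def using KN by auto
    have Klow: "K_grp G \<subseteq> M" if "M \<in> NC" for M unfolding Kint using that by auto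
    have PK: "Pm (K_grp G)" unfolding Pm_def
    proof (intro conjI allI impI KN KZ)
      fix M assume M: "M \<lhd> G \<and> \<not> M \<subseteq> Z \<and> M \<subseteq> K_grp G"
      hence "M \<in> NC" unfolding NC_def by simp
      hence "K_grp G \<subseteq> M" by (rule Klow)
      thus "M = K_grp G" using M by auto
    qed
    have uK: "N = K_grp G" if PN: "Pm N" for N
    proof -
      have NNC: "N \<in> NC" using PN unfolding Pm_def NC_def by simp
      have minN: "\<forall>M. M \<lhd> G \<and> \<not> M \<subseteq> Z \<and> M \<subseteq> N \<longrightarrow> M = N" using PN unfolding Pm_def by simp
      have "K_grp G \<subseteq> N" using Klow[OF NNC] .
      hence "K_grp G = N" using minN KN KZ by simp
      thus ?thesis by simp
    qed
    show "\<exists>!N. Pm N" using PK uK by (intro ex1I)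
  next
    assume "\<exists>!N. Pm N"
    then obtain N where PN: "Pm N" and uniq: "\<forall>N'. Pm N' \<longrightarrow> N' = N"
      unfolding Ex1_def by blast
    have NNC: "N \<in> NC" and NZ: "\<not> N \<subseteq> Z" using PN unfolding Pm_def NC_def by auto
    have NM: "N \<subseteq> M" if M: "M \<in> NC" for M
    proof -
      define c0 where "c0 = (LEAST c. \<exists>M'. M' \<in> NC \<and> M' \<subseteq> M \<and> card M' = c)"
      have "\<exists>M'. M' \<in> NC \<and> M' \<subseteq> M \<and> card M' = c0"
        unfolding c0_def using LeastI_ex[of "\<lambda>c. \<exists>M'. M' \<in> NC \<and> M' \<subseteq> M \<and> card M' = c"] M by blast
      then obtain M' where M': "M' \<in> NC" "M' \<subseteq> M" "card M' = c0" by blast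
      have lmin: "c0 \<le> card M''" if h1: "M'' \<in> NC" and h2: "M'' \<subseteq> M" for M''
        unfolding c0_def using h1 h2 by (intro Least_le) blast
      have PM': "Pm M'" unfolding Pm_def
      proof (intro conjI allI impI)
        show "M' \<lhd> G" "\<not> M' \<subseteq> Z" using M'(1) unfolding NC_def by auto
        fix M'' assume hM: "M'' \<lhd> G \<and> \<not> M'' \<subseteq> Z \<and> M'' \<subseteq> M'"
        have "M'' \<in> NC" using hM unfolding NC_def by simp
        moreover have "M'' \<subseteq> M" using hM M' by auto
        ultimately have "card M' \<le> card M''" using lmin M' by simp
        moreover have "card M'' \<le> card M'" using card_mono[OF finsub[OF M'(1)]] hM by simp
        ultimately have "card M'' = card M'" by simp
        thus "M'' = M'" using card_subset_eq[OF finsub[OF M'(1)]] hM by simp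
      qed
      hence "M' = N" using uniq by simp
      thus ?thesis using M' by simp
    qed
    have "N \<subseteq> K_grp G" unfolding Kint using NM by auto
    thus "\<not> K_grp G \<subseteq> Z" using NZ by auto
  qed
  show ?thesis using part1 part2 unfolding NC_def Z_def Pm_def by simp
qed

end
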